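(* Let $\mathscr{H}$ be a finite-dimensional complex Hilbert space and, for $i=1,\dots,n$, let $A_i=\{a^{(i)}_k\}_{k=1}^{m_i}$ be a tight frame of $\mathscr{H}$ with frame bound $\alpha_i>0$. Then $A_1,\dots,A_n$ are $s$-order incompatible if and only if $\sum_{i=1}^{n}n_{A_i}(|\varphi\rangle)\ge s$ for every nonzero $|\varphi\rangle\in\mathscr{H}$ with equality attained for some nonzero $|\varphi\rangle$, i.e. $\min_{|\varphi\rangle\neq0}\sum_{i=1}^{n}n_{A_i}(|\varphi\rangle)=s$.
   Context: A finite family $\{a_k\}_{k=1}^{m}\subset\mathscr{H}$ is a tight frame with frame bound $\alpha>0$ if $\sum_{k=1}^{m}|\langle x,a_k\rangle|^2=\alpha\|x\|^2$ for all $x\in\mathscr{H}$. Write $I_i=\{1,\dots,m_i\}$. The tight frames $A_1,\dots,A_n$ are called $s$-order incompatible, for an integer $s$, if: (1) for all nonempty $S_i\subseteq I_i$ ($i=1,\dots,n$) with $\sum_i|S_i|<s$ and every nonzero $x\in\mathscr{H}$, the equalities $\sum_{k\in S_i}|\langle x,a^{(i)}_k\rangle|^2=\alpha_i\|x\|^2$ do not hold simultaneously for all $i=1,\dots,n$; and (2) there exist nonempty $S_i\subseteq I_i$ with $\sum_i|S_i|=s$ and a nonzero $x\in\mathscr{H}$ such that these equalities hold for all $i$. For a vector $|\varphi\rangle$, $n_{A_i}(|\varphi\rangle)$ is the number of indices $k$ with $\langle a^{(i)}_k,\varphi\rangle\neq0$. *)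

theory Defs
  imports "HOL-Analysis.Analysis"
begin

text \<open>The finite-dimensional complex Hilbert space is modelled as complex ^ 'd
  (any finite index type 'd), with the standard inner product, linear in the
  first argument and conjugate-linear in the second; the norm on complex ^ 'd
  is the induced Euclidean norm.\<close>

definition cinner :: "complex ^ 'd \<Rightarrow> complex ^ 'd \<Rightarrow> complex" where
  "cinner x y = (\<Sum>j\<in>UNIV. x $ j * cnj (y $ j))"

definition tight_frame :: "(nat \<Rightarrow> complex ^ 'd) \<Rightarrow> nat \<Rightarrow> real \<Rightarrow> bool" where
  "tight_frame a m \<alpha> \<longleftrightarrow> \<alpha> > 0 \<and>
     (\<forall>x. (\<Sum>k\<in>{1..m}. (cmod (cinner x (a k)))\<^sup>2) = \<alpha> * (norm x)\<^sup>2)"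

definition frame_eqs ::
  "(nat \<Rightarrow> nat \<Rightarrow> complex ^ 'd) \<Rightarrow> (nat \<Rightarrow> real) \<Rightarrow> nat \<Rightarrow> (nat \<Rightarrow> nat set) \<Rightarrow> complex ^ 'd \<Rightarrow> bool" where
  "frame_eqs A \<alpha> n S x \<longleftrightarrow>
     (\<forall>i\<in>{1..n}. (\<Sum>k\<in>S i. (cmod (cinner x (A i k)))\<^sup>2) = \<alpha> i * (norm x)\<^sup>2)"

definition admissible_sets :: "(nat \<Rightarrow> nat) \<Rightarrow> nat \<Rightarrow> (nat \<Rightarrow> nat set) \<Rightarrow> bool" where
  "admissible_sets m n S \<longleftrightarrow> (\<forall>i\<in>{1..n}. S i \<noteq> {} \<and> S i \<subseteq> {1..m i})"

definition s_order_incompatible ::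
  "(nat \<Rightarrow> nat \<Rightarrow> complex ^ 'd) \<Rightarrow> (nat \<Rightarrow> nat) \<Rightarrow> (nat \<Rightarrow> real) \<Rightarrow> nat \<Rightarrow> int \<Rightarrow> bool" where
  "s_order_incompatible A m \<alpha> n s \<longleftrightarrow>
     (\<forall>S. admissible_sets m n S \<and> int (\<Sum>i\<in>{1..n}. card (S i)) < s \<longrightarrow>
        (\<forall>x. x \<noteq> 0 \<longrightarrow> \<not> frame_eqs A \<alpha> n S x)) \<and>
     (\<exists>S x. admissible_sets m n S \<and> int (\<Sum>i\<in>{1..n}. card (S i)) = s \<and>
        x \<noteq> 0 \<and> frame_eqs A \<alpha> n S x)"

definition n_count :: "(nat \<Rightarrow> complex ^ 'd) \<Rightarrow> nat \<Rightarrow> complex ^ 'd \<Rightarrow> nat" where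
  "n_count a m \<phi> = card {k\<in>{1..m}. cinner (a k) \<phi> \<noteq> 0}"

end

theory Submission
  imports Defs
begin

lemma cinner_commute: "cinner y x = cnj (cinner x y)"
  unfolding cinner_def by (simp add: mult.commute)

definition supp_f :: "(nat \<Rightarrow> complex ^ 'd) \<Rightarrow> nat \<Rightarrow> complex ^ 'd \<Rightarrow> nat set" where
  "supp_f a m x = {k\<in>{1..m}. cinner x (a k) \<noteq> 0}"

lemma n_count_supp: "n_count a m x = card (supp_f a m x)"
proof -
  have "{k\<in>{1..m}. cinner (a k) x \<noteq> 0} = supp_f a m x"
    unfolding supp_f_def by (auto simp: cinner_commute[of "a _" x])
  thus ?thesis unfolding n_count_def by simp
qed

lemma frame_eq_iff:
  assumes tf: "tight_frame a m \<alpha>" and S: "S \<subseteq> {1..m}"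
  shows "(\<Sum>k\<in>S. (cmod (cinner x (a k)))\<^sup>2) = \<alpha> * (norm x)\<^sup>2 \<longleftrightarrow> supp_f a m x \<subseteq> S"
proof -
  let ?f = "\<lambda>k. (cmod (cinner x (a k)))\<^sup>2"
  have full: "(\<Sum>k\<in>{1..m}. ?f k) = \<alpha> * (norm x)\<^sup>2" using tf unfolding tight_frame_def by blast
  have split: "(\<Sum>k\<in>{1..m}. ?f k) = (\<Sum>k\<in>S. ?f k) + (\<Sum>k\<in>{1..m}-S. ?f k)"
    using sum.subset_diff[OF S finite_atLeastAtMost, of ?f] by simp
  have "(\<Sum>k\<in>S. ?f k) = \<alpha> * (norm x)\<^sup>2 \<longleftrightarrow> (\<Sum>k\<in>{1..m}-S. ?f k) = 0"
    using full split by linarith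
  also have "\<dots> \<longleftrightarrow> (\<forall>k\<in>{1..m}-S. ?f k = 0)"
    by (rule sum_nonneg_eq_0_iff) auto
  also have "\<dots> \<longleftrightarrow> supp_f a m x \<subseteq> S"
    unfolding supp_f_def by auto
  finally show ?thesis .
qed

lemma supp_nonempty:
  assumes tf: "tight_frame a m \<alpha>" and x: "x \<noteq> 0"
  shows "supp_f a m x \<noteq> {}"
proof
  assume e: "supp_f a m x = {}"
  have "(\<Sum>k\<in>{1..m}. (cmod (cinner x (a k)))\<^sup>2) = 0"
    using e unfolding supp_f_def by (intro sum.neutral) auto
  moreover have "(\<Sum>k\<in>{1..m}. (cmod (cinner x (a k)))\<^sup>2) = \<alpha> * (norm x)\<^sup>2"
    using tf unfolding tight_frame_def by blast
  moreover have "\<alpha> > 0" using tf unfolding tight_frame_def by blast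
  moreover have "norm x > 0" using x by simp
  ultimately show False by simp
qed

theorem mainTheorem6:
  fixes A :: "nat \<Rightarrow> nat \<Rightarrow> complex ^ 'd" and m :: "nat \<Rightarrow> nat"
    and \<alpha> :: "nat \<Rightarrow> real" and n :: nat and s :: int
  assumes "\<forall>i\<in>{1..n}. tight_frame (A i) (m i) (\<alpha> i)"
  shows "s_order_incompatible A m \<alpha> n s \<longleftrightarrow>
    ((\<forall>\<phi>. \<phi> \<noteq> 0 \<longrightarrow> int (\<Sum>i\<in>{1..n}. n_count (A i) (m i) \<phi>) \<ge> s) \<and>
     (\<exists>\<phi>. \<phi> \<noteq> 0 \<and> int (\<Sum>i\<in>{1..n}. n_count (A i) (m i) \<phi>) = s))"
proof -
  define N where "N x = (\<Sum>i\<in>{1..n}. n_count (A i) (m i) x)" for x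
  have feq: "frame_eqs A \<alpha> n S x \<longleftrightarrow> (\<forall>i\<in>{1..n}. supp_f (A i) (m i) x \<subseteq> S i)"
    if "admissible_sets m n S" for S x
  proof -
    have "\<forall>i\<in>{1..n}. ((\<Sum>k\<in>S i. (cmod (cinner x (A i k)))\<^sup>2) = \<alpha> i * (norm x)\<^sup>2 \<longleftrightarrow> supp_f (A i) (m i) x \<subseteq> S i)"
    proof
      fix i assume i: "i \<in> {1..n}"
      have "S i \<subseteq> {1..m i}" using that i unfolding admissible_sets_def by blast
      thus "(\<Sum>k\<in>S i. (cmod (cinner x (A i k)))\<^sup>2) = \<alpha> i * (norm x)\<^sup>2 \<longleftrightarrow> supp_f (A i) (m i) x \<subseteq> S i"
        using frame_eq_iff[of "A i" "m i" "\<alpha> i" "S i" x] assms i by blast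
    qed
    thus ?thesis unfolding frame_eqs_def by blast
  qed
  have suppS_adm: "admissible_sets m n (\<lambda>i. supp_f (A i) (m i) x)" if "x \<noteq> 0" for x
    unfolding admissible_sets_def
  proof
    fix i assume i: "i \<in> {1..n}"
    show "supp_f (A i) (m i) x \<noteq> {} \<and> supp_f (A i) (m i) x \<subseteq> {1..m i}"
      using supp_nonempty[of "A i" "m i" "\<alpha> i" x] assms i that unfolding supp_f_def by blast
  qed
  have suppS_eq: "frame_eqs A \<alpha> n (\<lambda>i. supp_f (A i) (m i) x) x" if "x \<noteq> 0" for x
    using feq[OF suppS_adm[OF that]] by simp
  have suppS_card: "(\<Sum>i\<in>{1..n}. card (supp_f (A i) (m i) x)) = N x" for x
    unfolding N_def by (simp add: n_count_supp)
  have bound: "N x \<le> (\<Sum>i\<in>{1..n}. card (S i))"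
    if "admissible_sets m n S" "frame_eqs A \<alpha> n S x" for S x
  proof -
    have "\<forall>i\<in>{1..n}. card (supp_f (A i) (m i) x) \<le> card (S i)"
    proof
      fix i assume i: "i \<in> {1..n}"
      have "S i \<subseteq> {1..m i}" using that(1) i unfolding admissible_sets_def by blast
      hence "finite (S i)" using finite_subset by blast
      moreover have "supp_f (A i) (m i) x \<subseteq> S i" using feq[OF that(1)] that(2) i by blast
      ultimately show "card (supp_f (A i) (m i) x) \<le> card (S i)" by (rule card_mono)
    qed
    hence "(\<Sum>i\<in>{1..n}. card (supp_f (A i) (m i) x)) \<le> (\<Sum>i\<in>{1..n}. card (S i))"
      by (intro sum_mono) blast
    thus ?thesis using suppS_card by simp
  qed
  have P1: "(\<forall>S. admissible_sets m n S \<and> int (\<Sum>i\<in>{1..n}. card (S i)) < s \<longrightarrow>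
        (\<forall>x. x \<noteq> 0 \<longrightarrow> \<not> frame_eqs A \<alpha> n S x)) \<longleftrightarrow> (\<forall>x. x \<noteq> 0 \<longrightarrow> int (N x) \<ge> s)"
  proof
    assume H: "\<forall>S. admissible_sets m n S \<and> int (\<Sum>i\<in>{1..n}. card (S i)) < s \<longrightarrow>
        (\<forall>x. x \<noteq> 0 \<longrightarrow> \<not> frame_eqs A \<alpha> n S x)"
    show "\<forall>x. x \<noteq> 0 \<longrightarrow> int (N x) \<ge> s"
    proof (intro allI impI)
      fix x :: "complex ^ 'd" assume x: "x \<noteq> 0"
      show "int (N x) \<ge> s"
        using H[rule_format, of "\<lambda>i. supp_f (A i) (m i) x" x] suppS_adm[OF x] suppS_eq[OF x] x suppS_card[of x]
        by linarith
    qed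
  next
    assume H: "\<forall>x. x \<noteq> 0 \<longrightarrow> int (N x) \<ge> s"
    show "\<forall>S. admissible_sets m n S \<and> int (\<Sum>i\<in>{1..n}. card (S i)) < s \<longrightarrow>
        (\<forall>x. x \<noteq> 0 \<longrightarrow> \<not> frame_eqs A \<alpha> n S x)"
    proof (intro allI impI notI)
      fix S x assume a: "admissible_sets m n S \<and> int (\<Sum>i\<in>{1..n}. card (S i)) < s"
        and x: "x \<noteq> 0" and f: "frame_eqs A \<alpha> n S x"
      have "N x \<le> (\<Sum>i\<in>{1..n}. card (S i))" using bound a f by blast
      moreover have "s \<le> int (N x)" using H x by blast
      ultimately show False using a by linarith
    qed
  qed
  show ?thesis
    unfolding s_order_incompatible_def P1 N_def[symmetric]
  proof (intro iffI conjI)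
    assume H: "(\<forall>x. x \<noteq> 0 \<longrightarrow> s \<le> int (N x)) \<and>
      (\<exists>S x. admissible_sets m n S \<and> int (\<Sum>i\<in>{1..n}. card (S i)) = s \<and> x \<noteq> 0 \<and> frame_eqs A \<alpha> n S x)"
    thus "\<forall>x. x \<noteq> 0 \<longrightarrow> s \<le> int (N x)" by blast
    from H obtain S x where S: "admissible_sets m n S" "int (\<Sum>i\<in>{1..n}. card (S i)) = s"
      "x \<noteq> 0" "frame_eqs A \<alpha> n S x" by blast
    have "N x \<le> (\<Sum>i\<in>{1..n}. card (S i))" using bound S by blast
    moreover have "s \<le> int (N x)" using H S(3) by blast
    ultimately have "int (N x) = s" using S(2) by linarith
    thus "\<exists>\<phi>. \<phi> \<noteq> 0 \<and> int (N \<phi>) = s" using S(3) by blast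
  next
    assume H: "(\<forall>x. x \<noteq> 0 \<longrightarrow> s \<le> int (N x)) \<and> (\<exists>\<phi>. \<phi> \<noteq> 0 \<and> int (N \<phi>) = s)"
    thus "\<forall>x. x \<noteq> 0 \<longrightarrow> s \<le> int (N x)" by blast
    from H obtain x where x: "x \<noteq> 0" "int (N x) = s" by blast
    show "\<exists>S x. admissible_sets m n S \<and> int (\<Sum>i\<in>{1..n}. card (S i)) = s \<and> x \<noteq> 0 \<and> frame_eqs A \<alpha> n S x"
    proof (intro exI conjI)
      show "admissible_sets m n (\<lambda>i. supp_f (A i) (m i) x)" by (rule suppS_adm[OF x(1)])
      show "int (\<Sum>i\<in>{1..n}. card (supp_f (A i) (m i) x)) = s" using suppS_card[of x] x(2) by simp
      show "frame_eqs A \<alpha> n (\<lambda>i. supp_f (A i) (m i) x) x" by (rule suppS_eq[OF x(1)])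
    qed (rule x(1))
  qed
qed

end
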